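(* (i) If $\mathscr B$ is not cocanceling, then no bounded $C^2$ domain $\Omega\subset\mathbb R^n$ is strongly $\mathscr B$-pseudoconvex. (ii) If $\mathscr B$ is cocanceling and not elliptic, then every bounded $C^2$ strictly convex domain (all principal curvatures of $\partial\Omega$ positive at every boundary point) is strongly $\mathscr B$-pseudoconvex.
   Context: $E,F$ finite-dimensional real or complex inner product spaces. $\mathscr B=\sum_jB_j\partial_j$ with $B_j\in\mathcal L(F,E)$, symbol $\mathbb B(\xi)=\sum_j\xi_jB_j$. $\mathscr B$ is cocanceling if $\bigcap_{\xi\in S^{n-1}}\ker\mathbb B(\xi)=\{0\}$; $\mathscr B$ is elliptic if $\mathbb B(\xi)$ is injective for all $\xi\ne0$. For a bounded $C^2$ domain with outward unit normal $\nu$ and a $C^1$ extension $N$ of $\nu$ near $\partial\Omega$, $L_B(x):=\sum_{j=1}^n\mathbb B(e_j)^*\mathbb B(\partial_jN(x))$. $\Omega$ is strongly $\mathscr B$-pseudoconvex if for every $x\in\partial\Omega$ the quadratic form $u\mapsto\langle u,L_B(x)u\rangle$ is positive definite on $\ker\mathbb B(\nu(x))$. *)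

theory Defs
  imports "HOL-Analysis.Analysis"
begin

text \<open>Scalars 'k are real or complex; cj is the conjugation (id for real, cnj for complex).
 E = 'k^'e, F = 'k^'f with the standard inner product; operators are matrices.\<close>

definition vinner :: "('k::real_normed_field \<Rightarrow> 'k) \<Rightarrow> 'k^'m::finite \<Rightarrow> 'k^'m \<Rightarrow> 'k" where
  "vinner cj x y = (\<Sum>i\<in>UNIV. cj (x$i) * y$i)"

definition adj :: "('k::real_normed_field \<Rightarrow> 'k) \<Rightarrow> 'k^'a::finite^'b::finite \<Rightarrow> 'k^'b^'a" where
  "adj cj M = (\<chi> i j. cj (M$j$i))"

definition symb :: "('n::finite \<Rightarrow> 'k::real_normed_field^'f::finite^'e::finite) \<Rightarrow> real^'n \<Rightarrow> 'k^'f^'e" where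
  "symb B \<xi> = (\<Sum>j\<in>UNIV. (\<xi>$j) *\<^sub>R B j)"

definition opker :: "'k::real_normed_field^'f::finite^'e::finite \<Rightarrow> ('k^'f) set" where
  "opker M = {u. M *v u = 0}"

definition cocanceling :: "('n::finite \<Rightarrow> 'k::real_normed_field^'f::finite^'e::finite) \<Rightarrow> bool" where
  "cocanceling B \<longleftrightarrow> (\<Inter>\<xi>\<in>sphere 0 1. opker (symb B \<xi>)) = {0}"

definition elliptic :: "('n::finite \<Rightarrow> 'k::real_normed_field^'f::finite^'e::finite) \<Rightarrow> bool" where
  "elliptic B \<longleftrightarrow> (\<forall>\<xi>. \<xi> \<noteq> 0 \<longrightarrow> inj (\<lambda>u. symb B \<xi> *v u))"

definition partial :: "(real^'n::finite \<Rightarrow> 'b::real_normed_vector) \<Rightarrow> 'n \<Rightarrow> real^'n \<Rightarrow> 'b" where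
  "partial f j x = frechet_derivative f (at x) (axis j 1)"

definition C1_on :: "(real^'n::finite) set \<Rightarrow> (real^'n \<Rightarrow> 'b::real_normed_vector) \<Rightarrow> bool" where
  "C1_on U f \<longleftrightarrow> open U \<and> (\<forall>x\<in>U. f differentiable (at x)) \<and>
     (\<forall>j. continuous_on U (partial f j))"

definition C2_on :: "(real^'n::finite) set \<Rightarrow> (real^'n \<Rightarrow> 'b::real_normed_vector) \<Rightarrow> bool" where
  "C2_on U f \<longleftrightarrow> C1_on U f \<and> (\<forall>j. C1_on U (partial f j))"

definition grad :: "(real^'n::finite \<Rightarrow> real) \<Rightarrow> real^'n \<Rightarrow> real^'n" where
  "grad \<rho> x = (\<chi> j. partial \<rho> j x)"

definition local_defining :: "(real^'n::finite) set \<Rightarrow> real^'n \<Rightarrow> real \<Rightarrow> (real^'n \<Rightarrow> real) \<Rightarrow> bool" where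
  "local_defining \<Omega> p r \<rho> \<longleftrightarrow> r > 0 \<and> C2_on (ball p r) \<rho> \<and>
     (\<forall>x\<in>ball p r. grad \<rho> x \<noteq> 0) \<and> \<Omega> \<inter> ball p r = {x\<in>ball p r. \<rho> x < 0}"

definition bounded_C2_domain :: "(real^'n::finite) set \<Rightarrow> bool" where
  "bounded_C2_domain \<Omega> \<longleftrightarrow> open \<Omega> \<and> connected \<Omega> \<and> \<Omega> \<noteq> {} \<and> bounded \<Omega> \<and>
     (\<forall>p\<in>frontier \<Omega>. \<exists>r \<rho>. local_defining \<Omega> p r \<rho>)"

definition outward_unit_normal :: "(real^'n::finite) set \<Rightarrow> (real^'n \<Rightarrow> real^'n) \<Rightarrow> bool" where
  "outward_unit_normal \<Omega> \<nu> \<longleftrightarrow> (\<forall>p\<in>frontier \<Omega>. \<exists>r \<rho>. local_defining \<Omega> p r \<rho> \<and>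
     \<nu> p = (1 / norm (grad \<rho> p)) *\<^sub>R grad \<rho> p)"

definition normal_extension :: "(real^'n::finite) set \<Rightarrow> (real^'n \<Rightarrow> real^'n) \<Rightarrow> (real^'n) set \<Rightarrow> (real^'n \<Rightarrow> real^'n) \<Rightarrow> bool" where
  "normal_extension \<Omega> \<nu> U N \<longleftrightarrow> frontier \<Omega> \<subseteq> U \<and> C1_on U N \<and> (\<forall>x\<in>frontier \<Omega>. N x = \<nu> x)"

text \<open>Strict convexity: at each boundary point, every principal curvature (eigenvalue of the
 shape operator v \<mapsto> D_v \<nu> on the tangent space, \<nu> extended by grad \<rho>/|grad \<rho>|) is positive.\<close>

definition strictly_convex_C2 :: "(real^'n::finite) set \<Rightarrow> bool" where
  "strictly_convex_C2 \<Omega> \<longleftrightarrow> (\<forall>p\<in>frontier \<Omega>. \<exists>r \<rho>. local_defining \<Omega> p r \<rho> \<and>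
     (\<forall>v \<kappa>. v \<noteq> 0 \<and> v \<bullet> grad \<rho> p = 0 \<and>
        frechet_derivative (\<lambda>x. (1 / norm (grad \<rho> x)) *\<^sub>R grad \<rho> x) (at p) v = \<kappa> *\<^sub>R v
        \<longrightarrow> \<kappa> > 0))"

definition L_B :: "('k::real_normed_field \<Rightarrow> 'k) \<Rightarrow> ('n::finite \<Rightarrow> 'k^'f::finite^'e::finite) \<Rightarrow>
    (real^'n \<Rightarrow> real^'n) \<Rightarrow> real^'n \<Rightarrow> 'k^'f^'f" where
  "L_B cj B N x = (\<Sum>j\<in>UNIV. adj cj (symb B (axis j 1)) ** symb B (partial N j x))"

definition strongly_pseudoconvex :: "('k::real_normed_field \<Rightarrow> 'k) \<Rightarrow> ('n::finite \<Rightarrow> 'k^'f::finite^'e::finite) \<Rightarrow>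
    (real^'n) set \<Rightarrow> (real^'n \<Rightarrow> real^'n) \<Rightarrow> (real^'n \<Rightarrow> real^'n) \<Rightarrow> bool" where
  "strongly_pseudoconvex cj B \<Omega> \<nu> N \<longleftrightarrow> (\<forall>x\<in>frontier \<Omega>. \<forall>u. u \<in> opker (symb B (\<nu> x)) \<and> u \<noteq> 0 \<longrightarrow>
     (\<exists>r::real. r > 0 \<and> vinner cj u (L_B cj B N x *v u) = of_real r))"

end

theory Submission
  imports Defs
begin
lemma symb_mv:
  fixes B :: "'n::finite \<Rightarrow> 'k::real_normed_field^'f::finite^'e::finite"
  shows "symb B \<xi> *v u = (\<Sum>j\<in>UNIV. \<xi>$j *\<^sub>R (B j *v u))"
proof -
  have "(symb B \<xi> *v u)$i = (\<Sum>j\<in>UNIV. \<xi>$j *\<^sub>R (B j *v u))$i" for i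
  proof -
    have "(symb B \<xi> *v u)$i = (\<Sum>l\<in>UNIV. (\<Sum>j\<in>UNIV. of_real (\<xi>$j) * (B j $ i $ l)) * u$l)"
      unfolding symb_def matrix_vector_mult_def
      by (simp add: sum_component vector_scaleR_component del: scaleR_conv_of_real) (simp add: scaleR_conv_of_real)
    also have "\<dots> = (\<Sum>l\<in>UNIV. (\<Sum>j\<in>UNIV. of_real (\<xi>$j) * (B j $ i $ l) * u$l))"
      by (simp add: sum_distrib_right)
    also have "\<dots> = (\<Sum>j\<in>UNIV. (\<Sum>l\<in>UNIV. of_real (\<xi>$j) * (B j $ i $ l) * u$l))"
      by (rule sum.swap)
    also have "\<dots> = (\<Sum>j\<in>UNIV. \<xi>$j *\<^sub>R (B j *v u))$i"
      by (simp add: matrix_vector_mult_def sum_component vector_scaleR_component del: scaleR_conv_of_real)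
        (simp add: scaleR_conv_of_real sum_distrib_left mult.assoc)
    finally show ?thesis .
  qed
  then show ?thesis by (simp add: vec_eq_iff)
qed

lemma mv_sum:
  fixes M :: "'j \<Rightarrow> 'k::comm_ring_1^'f::finite^'e::finite"
  shows "(\<Sum>j\<in>J. M j) *v u = (\<Sum>j\<in>J. M j *v u)"
proof (induction J rule: infinite_finite_induct)
  case (insert x F) then show ?case by (simp add: matrix_vector_mult_add_rdistrib)
qed auto

lemma symb_axis:
  fixes B :: "'n::finite \<Rightarrow> 'k::real_normed_field^'f::finite^'e::finite"
  shows "symb B (axis j 1) = B j"
proof -
  have "(\<Sum>i\<in>UNIV. (axis j (1::real)) $ i *\<^sub>R B i) = (\<Sum>i\<in>UNIV. if i = j then B i else 0)"
    by (rule sum.cong) (auto simp: axis_def)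
  then show ?thesis unfolding symb_def by simp
qed

lemma frontier_nonempty:
  fixes \<Omega> :: "(real^'n::finite) set"
  assumes "bounded_C2_domain \<Omega>" shows "frontier \<Omega> \<noteq> {}"
  using assms frontier_eq_empty[of \<Omega>] unfolding bounded_C2_domain_def by auto

lemma part1:
  fixes B :: "'n::finite \<Rightarrow> 'k::real_normed_field^'f::finite^'e::finite"
  assumes nc: "\<not> cocanceling B" and dom: "bounded_C2_domain \<Omega>"
  shows "\<not> strongly_pseudoconvex cj B \<Omega> \<nu> N"
proof
  assume sp: "strongly_pseudoconvex cj B \<Omega> \<nu> N"
  have "0 \<in> (\<Inter>\<xi>\<in>sphere 0 1. opker (symb B \<xi>))" by (simp add: opker_def)
  with nc obtain u where u0: "u \<noteq> 0" and uk: "\<And>\<xi>. \<xi> \<in> sphere 0 1 \<Longrightarrow> symb B \<xi> *v u = 0"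
    unfolding cocanceling_def opker_def by blast
  have Bj: "B j *v u = 0" for j
    using uk[of "axis j 1"] by (simp add: symb_axis)
  have all: "symb B \<xi> *v u = 0" for \<xi>
    by (simp add: symb_mv Bj)
  obtain x where x: "x \<in> frontier \<Omega>" using frontier_nonempty[OF dom] by blast
  have "u \<in> opker (symb B (\<nu> x))" using all by (simp add: opker_def)
  with sp x u0 obtain r :: real where r: "r > 0" "vinner cj u (L_B cj B N x *v u) = of_real r"
    unfolding strongly_pseudoconvex_def by blast
  have "L_B cj B N x *v u = 0"
    unfolding L_B_def mv_sum by (simp add: matrix_vector_mul_assoc[symmetric] all)
  then have "vinner cj u (L_B cj B N x *v u) = 0" by (simp add: vinner_def)
  with r show False by simp
qed

lemma cj_sum:
  fixes cj :: "'k::real_normed_field \<Rightarrow> 'k"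
  assumes add: "\<And>a b. cj (a + b) = cj a + cj b" and z: "cj 0 = 0"
  shows "cj (\<Sum>i\<in>I. f i) = (\<Sum>i\<in>I. cj (f i))"
  by (induction I rule: infinite_finite_induct) (auto simp: add z)

lemma vinner_adj:
  fixes cj :: "'k::real_normed_field \<Rightarrow> 'k" and M :: "'k^'a::finite^'b::finite"
  assumes add: "\<And>a b. cj (a + b) = cj a + cj b" and z: "cj 0 = 0"
    and mul: "\<And>a b. cj (a * b) = cj a * cj b" and inv: "\<And>a. cj (cj a) = a"
  shows "vinner cj u (adj cj M *v w) = vinner cj (M *v u) w"
proof -
  have "vinner cj u (adj cj M *v w) = (\<Sum>i\<in>UNIV. \<Sum>l\<in>UNIV. cj (u$i) * (cj (M$l$i) * w$l))"
    unfolding vinner_def adj_def matrix_vector_mult_def by (simp add: sum_distrib_left)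
  also have "\<dots> = (\<Sum>l\<in>UNIV. \<Sum>i\<in>UNIV. cj (u$i) * (cj (M$l$i) * w$l))"
    by (rule sum.swap)
  also have "\<dots> = vinner cj (M *v u) w"
    unfolding vinner_def matrix_vector_mult_def
    by (simp add: cj_sum[OF add z] mul sum_distrib_right sum_distrib_left mult_ac)
  finally show ?thesis .
qed

lemma vinner_sum_right:
  "vinner cj u (\<Sum>j\<in>J. f j) = (\<Sum>j\<in>J. vinner cj u (f j))"
  unfolding vinner_def by (simp add: sum_component sum_distrib_left sum.swap[of _ UNIV J])

lemma vinner_scaleR_right:
  fixes u :: "'k::real_normed_field^'m::finite"
  shows "vinner cj u (r *\<^sub>R w) = of_real r * vinner cj u w"
  unfolding vinner_def by (simp add: vector_scaleR_component sum_distrib_left mult_ac del: scaleR_conv_of_real)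
    (simp add: scaleR_conv_of_real mult_ac)

lemma LB_expand:
  fixes cj :: "'k::real_normed_field \<Rightarrow> 'k" and B :: "'n::finite \<Rightarrow> 'k^'f::finite^'e::finite"
  assumes add: "\<And>a b. cj (a + b) = cj a + cj b" and z: "cj 0 = 0"
    and mul: "\<And>a b. cj (a * b) = cj a * cj b" and inv: "\<And>a. cj (cj a) = a"
  shows "vinner cj u (L_B cj B N x *v u) =
    (\<Sum>l\<in>UNIV. \<Sum>j\<in>UNIV. \<Sum>k\<in>UNIV. of_real (partial N j x $ k) * cj ((B j *v u)$l) * (B k *v u)$l)"
proof -
  have "vinner cj u (L_B cj B N x *v u) =
      (\<Sum>j\<in>UNIV. vinner cj (B j *v u) (symb B (partial N j x) *v u))"
    unfolding L_B_def mv_sum vinner_sum_right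
    by (simp add: matrix_vector_mul_assoc[symmetric] vinner_adj[OF add z mul inv] symb_axis)
  also have "\<dots> = (\<Sum>j\<in>UNIV. \<Sum>k\<in>UNIV. of_real (partial N j x $ k) * vinner cj (B j *v u) (B k *v u))"
    by (simp add: symb_mv vinner_sum_right vinner_scaleR_right)
  also have "\<dots> = (\<Sum>j\<in>UNIV. \<Sum>k\<in>UNIV. \<Sum>l\<in>UNIV. of_real (partial N j x $ k) * cj ((B j *v u)$l) * (B k *v u)$l)"
    unfolding vinner_def by (simp add: sum_distrib_left mult_ac)
  also have "\<dots> = (\<Sum>j\<in>UNIV. \<Sum>l\<in>UNIV. \<Sum>k\<in>UNIV. of_real (partial N j x $ k) * cj ((B j *v u)$l) * (B k *v u)$l)"
    by (rule sum.cong[OF refl], rule sum.swap)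
  also have "\<dots> = (\<Sum>l\<in>UNIV. \<Sum>j\<in>UNIV. \<Sum>k\<in>UNIV. of_real (partial N j x $ k) * cj ((B j *v u)$l) * (B k *v u)$l)"
    by (rule sum.swap)
  finally show ?thesis .
qed

lemma lin_expand:
  fixes A :: "real^'n::finite \<Rightarrow> 'b::real_vector"
  assumes "linear A"
  shows "A p = (\<Sum>j\<in>UNIV. p$j *\<^sub>R A (axis j 1))"
proof -
  have "A p = A (\<Sum>j\<in>UNIV. p$j *\<^sub>R axis j 1)"
    using basis_expansion[of p] by (simp add: scalar_mult_eq_scaleR)
  also have "\<dots> = (\<Sum>j\<in>UNIV. p$j *\<^sub>R A (axis j 1))"
    using assms by (simp add: linear_sum linear_scale)
  finally show ?thesis .
qed

lemma QF:
  fixes A :: "real^'n::finite \<Rightarrow> real^'n"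
  assumes "linear A"
  shows "(\<Sum>j\<in>UNIV. \<Sum>k\<in>UNIV. A (axis j 1) $ k * p$j * q$k) = q \<bullet> A p"
proof -
  have "q \<bullet> A p = (\<Sum>k\<in>UNIV. q$k * (\<Sum>j\<in>UNIV. p$j * A (axis j 1) $ k))"
    by (subst lin_expand[OF assms]) (simp add: inner_vec_def sum_component)
  also have "\<dots> = (\<Sum>k\<in>UNIV. \<Sum>j\<in>UNIV. A (axis j 1) $ k * p$j * q$k)"
    by (simp add: sum_distrib_left mult_ac)
  also have "\<dots> = (\<Sum>j\<in>UNIV. \<Sum>k\<in>UNIV. A (axis j 1) $ k * p$j * q$k)"
    by (rule sum.swap)
  finally show ?thesis by simp
qed

lemma ker_all_zero:
  fixes B :: "'n::finite \<Rightarrow> 'k::real_normed_field^'f::finite^'e::finite"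
  assumes cc: "cocanceling B" and u0: "u \<noteq> 0"
  shows "\<exists>j l. (B j *v u)$l \<noteq> 0"
proof (rule ccontr)
  assume "\<not> ?thesis"
  then have "B j *v u = 0" for j by (simp add: vec_eq_iff)
  then have "symb B \<xi> *v u = 0" for \<xi> by (simp add: symb_mv)
  then have "u \<in> (\<Inter>\<xi>\<in>sphere 0 1. opker (symb B \<xi>))" by (simp add: opker_def)
  with cc u0 show False unfolding cocanceling_def by simp
qed

lemma ker_comp:
  fixes B :: "'n::finite \<Rightarrow> 'k::real_normed_field^'f::finite^'e::finite"
  assumes "u \<in> opker (symb B n)"
  shows "(\<Sum>j\<in>UNIV. of_real (n$j) * (B j *v u)$l) = 0"
proof -
  have "(symb B n *v u)$l = 0" using assms by (simp add: opker_def)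
  then have "(\<Sum>j\<in>UNIV. n$j *\<^sub>R (B j *v u)$l) = 0"
    by (simp add: symb_mv sum_component vector_scaleR_component del: scaleR_conv_of_real)
  then show ?thesis by (simp add: scaleR_conv_of_real)
qed

lemma alg_real:
  fixes B :: "'n::finite \<Rightarrow> real^'f::finite^'e::finite" and A :: "real^'n \<Rightarrow> real^'n"
  assumes lin: "linear A"
    and pos: "\<And>a. a \<bullet> n = 0 \<Longrightarrow> a \<noteq> 0 \<Longrightarrow> 0 < a \<bullet> A a"
    and pN: "\<And>j. partial N j x = A (axis j 1)"
    and cc: "cocanceling B" and uk: "u \<in> opker (symb B n)" and u0: "u \<noteq> 0"
  shows "\<exists>r::real. r > 0 \<and> vinner (\<lambda>x. x) u (L_B (\<lambda>x. x) B N x *v u) = of_real r"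
proof -
  define \<gamma> where "\<gamma> l = (\<chi> j. (B j *v u)$l)" for l
  have V: "vinner (\<lambda>x. x) u (L_B (\<lambda>x. x) B N x *v u) = (\<Sum>l\<in>UNIV. \<gamma> l \<bullet> A (\<gamma> l))"
    unfolding LB_expand[of "\<lambda>x. x", simplified] pN \<gamma>_def QF[OF lin, symmetric]
    by (simp add: mult_ac)
  have orth: "\<gamma> l \<bullet> n = 0" for l
    using ker_comp[OF uk, of l] by (simp add: \<gamma>_def inner_vec_def mult_ac)
  obtain j l where jl: "(B j *v u)$l \<noteq> 0" using ker_all_zero[OF cc u0] by blast
  have "\<gamma> l \<noteq> 0" using jl by (auto simp: \<gamma>_def vec_eq_iff)
  have "0 < (\<Sum>l\<in>UNIV. \<gamma> l \<bullet> A (\<gamma> l))"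
  proof (rule sum_pos2[of UNIV l])
    show "0 < \<gamma> l \<bullet> A (\<gamma> l)" using pos[OF orth] \<open>\<gamma> l \<noteq> 0\<close> by blast
    show "0 \<le> \<gamma> i \<bullet> A (\<gamma> i)" for i
      using pos[OF orth] by (metis inner_zero_left order_le_less linear_0[OF lin])
  qed auto
  with V show ?thesis by auto
qed

lemma cplx_term:
  "of_real a * cnj z * w = complex_of_real (a * (Re z * Re w + Im z * Im w)) + \<i> * complex_of_real (a * (Re z * Im w - Im z * Re w))"
  by (simp add: complex_eq_iff algebra_simps)

lemma alg_complex:
  fixes B :: "'n::finite \<Rightarrow> complex^'f::finite^'e::finite" and A :: "real^'n \<Rightarrow> real^'n"
  assumes lin: "linear A"
    and sym: "\<And>a b. a \<bullet> n = 0 \<Longrightarrow> b \<bullet> n = 0 \<Longrightarrow> a \<bullet> A b = b \<bullet> A a"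
    and pos: "\<And>a. a \<bullet> n = 0 \<Longrightarrow> a \<noteq> 0 \<Longrightarrow> 0 < a \<bullet> A a"
    and pN: "\<And>j. partial N j x = A (axis j 1)"
    and cc: "cocanceling B" and uk: "u \<in> opker (symb B n)" and u0: "u \<noteq> 0"
  shows "\<exists>r::real. r > 0 \<and> vinner cnj u (L_B cnj B N x *v u) = of_real r"
proof -
  define c where "c l j = (B j *v u)$l" for l j
  define \<gamma> where "\<gamma> l = (\<chi> j. Re (c l j))" for l
  define \<delta> where "\<delta> l = (\<chi> j. Im (c l j))" for l
  define a where "a j k = A (axis j 1) $ k" for j k
  have V0: "vinner cnj u (L_B cnj B N x *v u) =
      (\<Sum>l\<in>UNIV. \<Sum>j\<in>UNIV. \<Sum>k\<in>UNIV. of_real (a j k) * cnj (c l j) * c l k)"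
    unfolding LB_expand[of cnj, OF complex_cnj_add complex_cnj_zero complex_cnj_mult complex_cnj_cnj]
      pN c_def a_def ..
  also have "\<dots> = (\<Sum>l\<in>UNIV. \<Sum>j\<in>UNIV. \<Sum>k\<in>UNIV.
        complex_of_real (a j k * (Re (c l j) * Re (c l k) + Im (c l j) * Im (c l k))) +
        \<i> * complex_of_real (a j k * (Re (c l j) * Im (c l k) - Im (c l j) * Re (c l k))))"
    by (simp only: cplx_term)
  also have "\<dots> = complex_of_real (\<Sum>l\<in>UNIV. \<Sum>j\<in>UNIV. \<Sum>k\<in>UNIV. a j k * (Re (c l j) * Re (c l k) + Im (c l j) * Im (c l k)))
      + \<i> * complex_of_real (\<Sum>l\<in>UNIV. \<Sum>j\<in>UNIV. \<Sum>k\<in>UNIV. a j k * (Re (c l j) * Im (c l k) - Im (c l j) * Re (c l k)))"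
    by (simp add: sum.distrib sum_distrib_left)
  finally have V1: "vinner cnj u (L_B cnj B N x *v u) = complex_of_real (\<Sum>l\<in>UNIV. \<Sum>j\<in>UNIV. \<Sum>k\<in>UNIV. a j k * (Re (c l j) * Re (c l k) + Im (c l j) * Im (c l k)))
      + \<i> * complex_of_real (\<Sum>l\<in>UNIV. \<Sum>j\<in>UNIV. \<Sum>k\<in>UNIV. a j k * (Re (c l j) * Im (c l k) - Im (c l j) * Re (c l k)))" .
  have R: "(\<Sum>j\<in>UNIV. \<Sum>k\<in>UNIV. a j k * (Re (c l j) * Re (c l k) + Im (c l j) * Im (c l k)))
     = \<gamma> l \<bullet> A (\<gamma> l) + \<delta> l \<bullet> A (\<delta> l)" for l
  proof -
    have "(\<Sum>j\<in>UNIV. \<Sum>k\<in>UNIV. a j k * (Re (c l j) * Re (c l k) + Im (c l j) * Im (c l k)))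
      = (\<Sum>j\<in>UNIV. \<Sum>k\<in>UNIV. A (axis j 1) $ k * \<gamma> l $ j * \<gamma> l $ k)
       + (\<Sum>j\<in>UNIV. \<Sum>k\<in>UNIV. A (axis j 1) $ k * \<delta> l $ j * \<delta> l $ k)"
      by (simp add: a_def \<gamma>_def \<delta>_def sum.distrib[symmetric] algebra_simps)
    then show ?thesis by (simp add: QF[OF lin])
  qed
  have orth: "\<gamma> l \<bullet> n = 0 \<and> \<delta> l \<bullet> n = 0" for l
  proof -
    have h: "(\<Sum>j\<in>UNIV. of_real (n$j) * c l j) = 0" using ker_comp[OF uk, of l] by (simp add: c_def)
    have "Re (\<Sum>j\<in>UNIV. of_real (n$j) * c l j) = 0" "Im (\<Sum>j\<in>UNIV. of_real (n$j) * c l j) = 0"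
      using h by simp_all
    then show ?thesis by (simp add: \<gamma>_def \<delta>_def inner_vec_def mult_ac)
  qed
  have I: "(\<Sum>j\<in>UNIV. \<Sum>k\<in>UNIV. a j k * (Re (c l j) * Im (c l k) - Im (c l j) * Re (c l k))) = 0" for l
  proof -
    have "(\<Sum>j\<in>UNIV. \<Sum>k\<in>UNIV. a j k * (Re (c l j) * Im (c l k) - Im (c l j) * Re (c l k)))
      = (\<Sum>j\<in>UNIV. \<Sum>k\<in>UNIV. A (axis j 1) $ k * \<gamma> l $ j * \<delta> l $ k)
       - (\<Sum>j\<in>UNIV. \<Sum>k\<in>UNIV. A (axis j 1) $ k * \<delta> l $ j * \<gamma> l $ k)"
      by (simp add: a_def \<gamma>_def \<delta>_def sum_subtractf[symmetric] algebra_simps)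
    also have "\<dots> = \<delta> l \<bullet> A (\<gamma> l) - \<gamma> l \<bullet> A (\<delta> l)" by (simp add: QF[OF lin])
    also have "\<dots> = 0" using sym orth by simp
    finally show ?thesis .
  qed
  have nn: "0 \<le> p \<bullet> A p" if "p \<bullet> n = 0" for p
    using pos[OF that] by (metis inner_zero_left order_le_less linear_0[OF lin])
  obtain j l where jl: "c l j \<noteq> 0" using ker_all_zero[OF cc u0] unfolding c_def by blast
  have "\<gamma> l \<noteq> 0 \<or> \<delta> l \<noteq> 0" using jl by (auto simp: \<gamma>_def \<delta>_def vec_eq_iff complex_eq_iff)
  then have pl: "0 < \<gamma> l \<bullet> A (\<gamma> l) + \<delta> l \<bullet> A (\<delta> l)"
    using pos orth nn by (smt (verit))
  have "0 < (\<Sum>l\<in>UNIV. \<gamma> l \<bullet> A (\<gamma> l) + \<delta> l \<bullet> A (\<delta> l))"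
  proof (rule sum_pos2[of UNIV l])
    show "0 \<le> \<gamma> i \<bullet> A (\<gamma> i) + \<delta> i \<bullet> A (\<delta> i)" for i using nn orth by (smt (verit))
  qed (use pl in auto)
  with V1 R I show ?thesis by auto
qed

lemma fd_expand:
  fixes f :: "real^'n::finite \<Rightarrow> 'b::real_normed_vector"
  assumes "f differentiable (at y)"
  shows "frechet_derivative f (at y) v = (\<Sum>j\<in>UNIV. v$j *\<^sub>R partial f j y)"
  unfolding partial_def using lin_expand[OF linear_frechet_derivative[OF assms]] .

lemma has_deriv_grad:
  fixes \<rho> :: "real^'n::finite \<Rightarrow> real"
  assumes "\<rho> differentiable (at y)"
  shows "(\<rho> has_derivative (\<lambda>v. grad \<rho> y \<bullet> v)) (at y)"
proof -
  have "frechet_derivative \<rho> (at y) = (\<lambda>v. grad \<rho> y \<bullet> v)"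
    by (rule ext) (simp add: fd_expand[OF assms] grad_def inner_vec_def mult_ac)
  then show ?thesis using assms frechet_derivative_works by metis
qed

lemma ld_basic:
  fixes \<rho> :: "real^'n::finite \<Rightarrow> real"
  assumes "local_defining \<Omega> p r \<rho>" "y \<in> ball p r"
  shows "\<rho> differentiable (at y)" "\<And>j. partial \<rho> j differentiable (at y)" "grad \<rho> y \<noteq> 0"
    "(\<rho> has_derivative (\<lambda>v. grad \<rho> y \<bullet> v)) (at y)" "r > 0"
    "y \<in> \<Omega> \<longleftrightarrow> \<rho> y < 0"
  using assms unfolding local_defining_def C2_on_def C1_on_def
  by (auto intro: has_deriv_grad)

lemma ld_cont:
  fixes \<rho> :: "real^'n::finite \<Rightarrow> real"
  assumes "local_defining \<Omega> p r \<rho>"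
  shows "continuous_on (ball p r) \<rho>"
  using ld_basic(1)[OF assms]
  by (meson continuous_at_imp_continuous_on differentiable_imp_continuous_within)

lemma line_deriv:
  fixes f :: "real^'n::finite \<Rightarrow> real"
  assumes "(f has_derivative (\<lambda>v. g \<bullet> v)) (at (c + t *\<^sub>R v))"
  shows "((\<lambda>s. f (c + s *\<^sub>R v)) has_real_derivative (g \<bullet> v)) (at t)"
proof -
  have d1: "((\<lambda>s. c + s *\<^sub>R v) has_derivative (\<lambda>h. h *\<^sub>R v)) (at t)"
    by (auto intro!: derivative_eq_intros)
  have "((\<lambda>s. f (c + s *\<^sub>R v)) has_derivative (\<lambda>h. g \<bullet> (h *\<^sub>R v))) (at t)"
    using has_derivative_compose[OF d1 assms] by simp
  then show ?thesis
    by (rule has_derivative_imp_has_field_derivative) (simp add: mult.commute)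
qed

lemma ld_frontier:
  fixes \<rho> :: "real^'n::finite \<Rightarrow> real"
  assumes op: "open \<Omega>" and ld: "local_defining \<Omega> p r \<rho>" and y: "y \<in> ball p r"
  shows "y \<in> frontier \<Omega> \<longleftrightarrow> \<rho> y = 0"
proof
  assume fy: "y \<in> frontier \<Omega>"
  then have yn: "y \<notin> \<Omega>" using op by (simp add: frontier_def interior_open)
  then have "\<rho> y \<ge> 0" using ld_basic(6)[OF ld y] by simp
  moreover have "\<not> \<rho> y > 0"
  proof
    assume pos: "\<rho> y > 0"
    have "continuous (at y) \<rho>"
      using ld_basic(1)[OF ld y] differentiable_imp_continuous_within by blast
    then obtain d where d: "d > 0" "\<And>z. dist z y < d \<Longrightarrow> dist (\<rho> z) (\<rho> y) < \<rho> y"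
      using pos unfolding continuous_at_eps_delta by blast
    have "y \<in> closure \<Omega>" using fy by (simp add: frontier_def)
    moreover have "min d (r - dist p y) > 0" using d y by simp
    ultimately obtain z where z: "z \<in> \<Omega>" "dist z y < min d (r - dist p y)"
      unfolding closure_approachable by blast
    then have zb: "z \<in> ball p r" using dist_triangle[of p z y] by (auto simp: dist_commute)
    have "\<rho> z < 0" using ld_basic(6)[OF ld zb] z by simp
    moreover have "dist (\<rho> z) (\<rho> y) < \<rho> y" using d z by auto
    ultimately show False by (simp add: dist_real_def)
  qed
  ultimately show "\<rho> y = 0" by simp
next
  assume r0: "\<rho> y = 0"
  then have yn: "y \<notin> \<Omega>" using ld_basic(6)[OF ld y] by simp
  define g where "g = grad \<rho> y"
  have g0: "g \<noteq> 0" using ld_basic(3)[OF ld y] g_def by simp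
  define w where "w = -g"
  have der: "((\<lambda>s. \<rho> (y + s *\<^sub>R w)) has_real_derivative (g \<bullet> w)) (at 0)"
    by (rule line_deriv) (use ld_basic(4)[OF ld y] g_def in simp)
  have neg: "g \<bullet> w < 0" using g0 by (simp add: w_def)
  obtain d where d: "d > 0" "\<And>h. h > 0 \<Longrightarrow> h < d \<Longrightarrow> \<rho> (y + h *\<^sub>R w) < 0"
    using DERIV_neg_dec_right[OF der neg] r0 by auto
  have "y \<in> closure \<Omega>"
    unfolding closure_approachable
  proof (intro allI impI)
    fix e :: real assume e: "e > 0"
    define h where "h = min (d/2) (min (e / (2 * norm g)) ((r - dist p y) / (2 * norm g)))"
    have ry: "r - dist p y > 0" using y by simp
    have h0: "h > 0" using d e g0 ry by (simp add: h_def)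
    have ng: "norm g > 0" using g0 by simp
    have h1: "h \<le> e / (2*norm g)" "h \<le> (r - dist p y)/(2*norm g)" by (auto simp: h_def)
    then have "h * (2*norm g) \<le> e" "h * (2*norm g) \<le> r - dist p y"
      using ng by (simp_all add: pos_le_divide_eq)
    then have hn: "h * norm g < e" "h * norm g < r - dist p y"
      using ng h0 e ry by (auto simp: algebra_simps)
    have dz: "dist (y + h *\<^sub>R w) y = h * norm g" using h0 by (simp add: dist_norm w_def)
    have zb: "y + h *\<^sub>R w \<in> ball p r"
      using dist_triangle[of p "y + h *\<^sub>R w" y] dz hn by (simp add: dist_commute)
    have "\<rho> (y + h *\<^sub>R w) < 0" using d h0 by (simp add: h_def)
    then have inO: "y + h *\<^sub>R w \<in> \<Omega>" using ld_basic(6)[OF ld zb] by simp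
    have "dist (y + h *\<^sub>R w) y < e" using dz hn by linarith
    with inO show "\<exists>x'\<in>\<Omega>. dist x' y < e" by blast
  qed
  then show "y \<in> frontier \<Omega>" using yn by (simp add: frontier_def interior_open op)
qed

lemma halfspace_parallel:
  fixes g1 g2 :: "'a::real_inner"
  assumes C: "\<And>v. g1 \<bullet> v < 0 \<Longrightarrow> g2 \<bullet> v \<le> 0" and g1: "g1 \<noteq> 0" and g2: "g2 \<noteq> 0"
  shows "(1/norm g1) *\<^sub>R g1 = (1/norm g2) *\<^sub>R g2"
proof -
  define \<mu> where "\<mu> = (g2 \<bullet> g1) / (g1 \<bullet> g1)"
  define w where "w = g2 - \<mu> *\<^sub>R g1"
  have gg: "g1 \<bullet> g1 > 0" using g1 by simp
  have wg: "w \<bullet> g1 = 0" using gg by (simp add: w_def \<mu>_def inner_diff_left)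
  have w0: "w = 0"
  proof (rule ccontr)
    assume wn: "w \<noteq> 0"
    then have ww: "w \<bullet> w > 0" by simp
    define t where "t = (\<bar>\<mu>\<bar> * (g1 \<bullet> g1) + 1) / (w \<bullet> w)"
    have t0: "t > 0" using ww by (simp add: t_def add_nonneg_pos)
    define v where "v = t *\<^sub>R w - g1"
    have "g1 \<bullet> v = - (g1 \<bullet> g1)" using wg by (simp add: v_def inner_diff_right inner_commute)
    then have "g2 \<bullet> v \<le> 0" using C gg by simp
    moreover have "g2 \<bullet> v = t * (w \<bullet> w) - \<mu> * (g1 \<bullet> g1)"
      unfolding v_def using wg
      by (simp add: w_def inner_diff_left inner_diff_right inner_commute algebra_simps)
    moreover have "t * (w \<bullet> w) = \<bar>\<mu>\<bar> * (g1 \<bullet> g1) + 1" using ww by (simp add: t_def)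
    ultimately show False using gg by (smt (verit) abs_ge_self mult_right_mono)
  qed
  then have g2e: "g2 = \<mu> *\<^sub>R g1" by (simp add: w_def)
  have "g1 \<bullet> (-g1) < 0" using g1 by simp
  then have "g2 \<bullet> (-g1) \<le> 0" by (rule C)
  then have "\<mu> * (g1 \<bullet> g1) \<ge> 0" by (simp add: g2e)
  then have "\<mu> \<ge> 0" using gg by (simp add: zero_le_mult_iff)
  moreover have "\<mu> \<noteq> 0" using g2 g2e by auto
  ultimately have mp: "\<mu> > 0" by simp
  show ?thesis using mp g1 by (simp add: g2e)
qed

lemma normal_unique:
  fixes f1 f2 :: "real^'n::finite \<Rightarrow> real"
  assumes d1: "(f1 has_derivative (\<lambda>v. g1 \<bullet> v)) (at q)" and d2: "(f2 has_derivative (\<lambda>v. g2 \<bullet> v)) (at q)"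
    and g1: "g1 \<noteq> 0" and g2: "g2 \<noteq> 0" and z1: "f1 q = 0" and z2: "f2 q = 0" and e: "e > 0"
    and eq: "\<And>z. z \<in> ball q e \<Longrightarrow> f1 z < 0 \<longleftrightarrow> f2 z < 0"
  shows "(1/norm g1) *\<^sub>R g1 = (1/norm g2) *\<^sub>R g2"
proof (rule halfspace_parallel[OF _ g1 g2])
  fix v assume v1: "g1 \<bullet> v < 0"
  show "g2 \<bullet> v \<le> 0"
  proof (rule ccontr)
    assume "\<not> g2 \<bullet> v \<le> 0"
    then have v2: "g2 \<bullet> v > 0" by simp
    have D1: "((\<lambda>s. f1 (q + s *\<^sub>R v)) has_real_derivative (g1 \<bullet> v)) (at 0)"
      by (rule line_deriv) (use d1 in simp)
    have D2: "((\<lambda>s. f2 (q + s *\<^sub>R v)) has_real_derivative (g2 \<bullet> v)) (at 0)"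
      by (rule line_deriv) (use d2 in simp)
    obtain a1 where a1: "a1 > 0" "\<And>h. h > 0 \<Longrightarrow> h < a1 \<Longrightarrow> f1 (q + h *\<^sub>R v) < 0"
      using DERIV_neg_dec_right[OF D1 v1] z1 by auto
    obtain a2 where a2: "a2 > 0" "\<And>h. h > 0 \<Longrightarrow> h < a2 \<Longrightarrow> f2 (q + h *\<^sub>R v) > 0"
      using DERIV_pos_inc_right[OF D2 v2] z2 by auto
    define E where "E = e / (norm v + 1)"
    define m where "m = min (min a1 a2) E"
    define h where "h = m / 2"
    have "E > 0" using e by (simp add: add_nonneg_pos E_def)
    then have m0: "m > 0" "m \<le> a1" "m \<le> a2" "m \<le> E" using a1 a2 by (auto simp: m_def)
    then have h0: "h > 0" and ha: "h < a1" "h < a2" and hE: "h < E" by (auto simp: h_def)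
    have "h * (norm v + 1) < e"
    proof -
      show ?thesis using hE unfolding E_def by (simp add: pos_less_divide_eq add_nonneg_pos)
    qed
    then have "h * norm v < e" using h0 by (simp add: algebra_simps)
    then have "q + h *\<^sub>R v \<in> ball q e" using h0 by (simp add: dist_norm)
    then show False using eq a1(2)[OF h0 ha(1)] a2(2)[OF h0 ha(2)] by auto
  qed
qed

lemma deriv_zero_dir:
  fixes h :: "'a::real_normed_vector \<Rightarrow> 'b::real_normed_vector"
  assumes hd: "(h has_derivative D) (at x)" and hx: "h x = 0"
    and pts: "\<And>\<epsilon> \<delta>. \<epsilon> > 0 \<Longrightarrow> \<delta> > 0 \<Longrightarrow>
       \<exists>t y. t > 0 \<and> h y = 0 \<and> norm (y - x - t *\<^sub>R v) \<le> \<epsilon> * t \<and> norm (y - x) < \<delta>"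
  shows "D v = 0"
proof (rule ccontr)
  assume nz: "D v \<noteq> 0"
  define c where "c = norm (D v)"
  have c0: "c > 0" using nz by (simp add: c_def)
  have bl: "bounded_linear D" using hd by (simp add: has_derivative_def)
  obtain K where K: "K > 0" "\<And>w. norm (D w) \<le> norm w * K"
    using bounded_linear.pos_bounded[OF bl] by blast
  define \<epsilon> where "\<epsilon> = c / (4 * K)"
  have e0: "\<epsilon> > 0" using c0 K by (simp add: \<epsilon>_def)
  define \<eta> where "\<eta> = c / (4 * (norm v + \<epsilon>))"
  have nv: "norm v + \<epsilon> > 0" using e0 by (simp add: add_nonneg_pos)
  have n0: "\<eta> > 0" using c0 nv by (simp add: \<eta>_def)
  obtain d where d: "d > 0" "\<And>y. norm (y - x) < d \<Longrightarrow> norm (h y - h x - D (y - x)) \<le> \<eta> * norm (y - x)"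
    using hd n0 unfolding has_derivative_at_alt by blast
  obtain t y where ty: "t > 0" "h y = 0" "norm (y - x - t *\<^sub>R v) \<le> \<epsilon> * t" "norm (y - x) < d"
    using pts[OF e0 d(1)] by blast
  have lin: "linear D" using bl bounded_linear.linear by blast
  have 1: "norm (D (y - x)) \<le> \<eta> * norm (y - x)" using d(2)[OF ty(4)] ty(2) hx by simp
  have 2: "norm (y - x) \<le> t * (norm v + \<epsilon>)"
  proof -
    have "norm (y - x) \<le> norm (y - x - t *\<^sub>R v) + norm (t *\<^sub>R v)"
      by (metis norm_triangle_sub add.commute)
    also have "\<dots> \<le> \<epsilon> * t + t * norm v" using ty by simp
    finally show ?thesis by (simp add: algebra_simps)
  qed
  have 3: "norm (D (y - x - t *\<^sub>R v)) \<le> \<epsilon> * t * K"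
    using K(2)[of "y - x - t *\<^sub>R v"] ty(3) K(1) by (meson mult_right_mono order_trans less_imp_le)
  have "t * c = norm (D (t *\<^sub>R v))" using ty(1) by (simp add: c_def linear_scale[OF lin])
  also have "D (t *\<^sub>R v) = D (y - x) - D (y - x - t *\<^sub>R v)" by (simp add: linear_diff[OF lin])
  also have "norm (D (y - x) - D (y - x - t *\<^sub>R v)) \<le> norm (D (y - x)) + norm (D (y - x - t *\<^sub>R v))"
    by (rule norm_triangle_ineq4)
  also have "\<dots> \<le> \<eta> * (t * (norm v + \<epsilon>)) + \<epsilon> * t * K"
    using 1 2 3 n0 by (smt (verit) mult_left_mono)
  also have "\<eta> * (t * (norm v + \<epsilon>)) = t * c / 4" using nv unfolding \<eta>_def by (simp add: field_simps)
  also have "\<epsilon> * t * K = t * c / 4" using K by (simp add: \<epsilon>_def)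
  finally have "t * c \<le> t * c / 2" by simp
  moreover have "t * c > 0" using ty(1) c0 by simp
  ultimately show False by linarith
qed

lemma aux_abs1: "\<bar>a - b\<bar> \<le> c \<Longrightarrow> c < b \<Longrightarrow> (0::real) < a" by (auto simp: abs_le_iff)
lemma aux_abs2: "\<bar>a - (- b) * k\<bar> \<le> c \<Longrightarrow> c < b * k \<Longrightarrow> a < (0::real)" by (auto simp: abs_le_iff)

lemma tangent_pts:
  fixes \<rho> :: "real^'n::finite \<Rightarrow> real"
  assumes rd: "(\<rho> has_derivative (\<lambda>w. g \<bullet> w)) (at x)" and r0: "\<rho> x = 0" and g0: "g \<noteq> 0"
    and cont: "continuous_on (ball x r) \<rho>" and vg: "v \<bullet> g = 0" and e: "\<epsilon> > 0" and dl: "\<delta> > 0"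
    and r: "r > 0"
  shows "\<exists>t y. t > 0 \<and> \<rho> y = 0 \<and> y \<in> ball x r \<and> norm (y - x - t *\<^sub>R v) \<le> \<epsilon> * t \<and> norm (y - x) < \<delta>"
proof -
  have ng: "norm g > 0" using g0 by simp
  have gg: "g \<bullet> g > 0" using g0 by simp
  define s where "s = \<epsilon> / (norm g + 1)"
  have s0: "s > 0" using e by (simp add: s_def add_nonneg_pos)
  have sg: "s * norm g \<le> \<epsilon>"
  proof -
    have "norm g + 1 > 0" by (simp add: add_nonneg_pos)
    then have "s * (norm g + 1) = \<epsilon>" by (simp add: s_def)
    then show ?thesis using s0 by (simp add: algebra_simps)
  qed
  define L where "L = norm v + s * norm g"
  have L0: "L > 0" using s0 ng by (simp add: L_def add_nonneg_pos)
  define \<eta> where "\<eta> = s * (g \<bullet> g) / (2 * L)"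
  have eta0: "\<eta> > 0" using s0 gg L0 by (simp add: \<eta>_def)
  have etaL: "\<eta> * L = s * (g \<bullet> g) / 2" using L0 by (simp add: \<eta>_def)
  obtain d where d: "d > 0" "\<And>y. norm (y - x) < d \<Longrightarrow> norm (\<rho> y - \<rho> x - g \<bullet> (y - x)) \<le> \<eta> * norm (y - x)"
    using rd eta0 unfolding has_derivative_at_alt by blast
  define m where "m = min d (min r \<delta>)"
  have m0: "m > 0" "m \<le> d" "m \<le> r" "m \<le> \<delta>" using d r dl by (auto simp: m_def)
  define t where "t = m / (2 * L)"
  have t0: "t > 0" using m0 L0 by (simp add: t_def)
  have tL: "t * L < m" using m0 L0 by (simp add: t_def)
  define z where "z \<sigma> = x + t *\<^sub>R v + \<sigma> *\<^sub>R g" for \<sigma>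
  have zn: "norm (z \<sigma> - x) \<le> t * L" if "\<bar>\<sigma>\<bar> \<le> s * t" for \<sigma>
  proof -
    have "z \<sigma> - x = t *\<^sub>R v + \<sigma> *\<^sub>R g" by (simp add: z_def)
    then have "norm (z \<sigma> - x) \<le> norm (t *\<^sub>R v) + norm (\<sigma> *\<^sub>R g)" by (metis norm_triangle_ineq)
    also have "\<dots> = t * norm v + \<bar>\<sigma>\<bar> * norm g" using t0 by simp
    also have "\<dots> \<le> t * norm v + s * t * norm g" using that ng by (simp add: mult_right_mono)
    finally show ?thesis by (simp add: L_def algebra_simps)
  qed
  have zb: "z \<sigma> \<in> ball x r" if "\<bar>\<sigma>\<bar> \<le> s * t" for \<sigma>
    using zn[OF that] tL m0 by (simp add: dist_norm norm_minus_commute)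
  have zval: "\<bar>\<rho> (z \<sigma>) - \<sigma> * (g \<bullet> g)\<bar> \<le> \<eta> * (t * L)" if "\<bar>\<sigma>\<bar> \<le> s * t" for \<sigma>
  proof -
    have "norm (z \<sigma> - x) < d" using zn[OF that] tL m0 by simp
    then have "norm (\<rho> (z \<sigma>) - \<rho> x - g \<bullet> (z \<sigma> - x)) \<le> \<eta> * norm (z \<sigma> - x)" by (rule d(2))
    also have "\<dots> \<le> \<eta> * (t * L)" using zn[OF that] eta0 by (simp add: mult_left_mono)
    finally show ?thesis using vg r0 by (simp add: z_def inner_add_right inner_commute)
  qed
  have st0: "s * t \<ge> 0" using s0 t0 by simp
  have Q: "\<eta> * (t * L) = (s * t * (g \<bullet> g)) / 2"
  proof -
    have "\<eta> * (t * L) = t * (\<eta> * L)" by simp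
    then show ?thesis using etaL by simp
  qed
  have P: "s * t * (g \<bullet> g) > 0" using s0 t0 gg by simp
  have z1: "\<bar>\<rho> (z (s * t)) - (s * t) * (g \<bullet> g)\<bar> \<le> (s * t * (g \<bullet> g)) / 2"
    using zval[of "s * t"] st0 Q by simp
  have z2: "\<bar>\<rho> (z (- (s * t))) - (- (s * t)) * (g \<bullet> g)\<bar> \<le> (s * t * (g \<bullet> g)) / 2"
    using zval[of "- (s * t)"] st0 Q by simp
  have "\<rho> (z (s * t)) > 0" by (rule aux_abs1[OF z1]) (use P in simp)
  moreover have "\<rho> (z (- (s * t))) < 0" by (rule aux_abs2[OF z2]) (use P in simp)
  moreover have "continuous_on {- (s * t) .. s * t} (\<lambda>\<sigma>. \<rho> (z \<sigma>))"
  proof (rule continuous_on_compose2[OF cont])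
    show "continuous_on {- (s * t)..s * t} z" unfolding z_def by (intro continuous_intros)
    show "z ` {- (s * t)..s * t} \<subseteq> ball x r" using zb by (auto simp: abs_le_iff)
  qed
  ultimately obtain \<sigma> where \<sigma>: "- (s * t) \<le> \<sigma>" "\<sigma> \<le> s * t" "\<rho> (z \<sigma>) = 0"
    using IVT'[of "\<lambda>\<sigma>. \<rho> (z \<sigma>)" "- (s * t)" 0 "s * t"] st0 by force
  have sa: "\<bar>\<sigma>\<bar> \<le> s * t" using \<sigma> by simp
  have "norm (z \<sigma> - x - t *\<^sub>R v) = \<bar>\<sigma>\<bar> * norm g" by (simp add: z_def)
  also have "\<dots> \<le> s * t * norm g" using sa ng by (simp add: mult_right_mono)
  also have "\<dots> \<le> \<epsilon> * t" using sg t0 by (simp add: mult_right_mono algebra_simps)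
  finally have 1: "norm (z \<sigma> - x - t *\<^sub>R v) \<le> \<epsilon> * t" .
  have 2: "norm (z \<sigma> - x) < \<delta>" using zn[OF sa] tL m0 by simp
  show ?thesis using t0 \<sigma>(3) zb[OF sa] 1 2 by blast
qed

lemma line_deriv2:
  fixes f :: "real^'n::finite \<Rightarrow> real"
  assumes "(f has_derivative f') (at (c + t *\<^sub>R v))"
  shows "((\<lambda>s. f (c + s *\<^sub>R v)) has_real_derivative f' v) (at t)"
proof -
  have d1: "((\<lambda>s. c + s *\<^sub>R v) has_derivative (\<lambda>h. h *\<^sub>R v)) (at t)"
    by (auto intro!: derivative_eq_intros)
  have lin: "linear f'" using assms has_derivative_linear by blast
  have "((\<lambda>s. f (c + s *\<^sub>R v)) has_derivative (\<lambda>h. f' (h *\<^sub>R v))) (at t)"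
    using has_derivative_compose[OF d1 assms] by simp
  then show ?thesis
    by (rule has_derivative_imp_has_field_derivative) (simp add: linear_scale[OF lin])
qed

definition fdir :: "(real^'n::finite \<Rightarrow> real) \<Rightarrow> real^'n \<Rightarrow> real^'n \<Rightarrow> real" where
  "fdir \<rho> w y = (\<Sum>j\<in>UNIV. w$j * partial \<rho> j y)"

definition D2 :: "(real^'n::finite \<Rightarrow> real) \<Rightarrow> real^'n \<Rightarrow> real^'n \<Rightarrow> real^'n \<Rightarrow> real" where
  "D2 \<rho> w w' y = (\<Sum>j\<in>UNIV. w$j * (\<Sum>i\<in>UNIV. w'$i * partial (partial \<rho> j) i y))"

lemma C2_F1:
  fixes \<rho> :: "real^'n::finite \<Rightarrow> real"
  assumes "C2_on S \<rho>" "y \<in> S"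
  shows "(\<rho> has_derivative (\<lambda>v. fdir \<rho> v y)) (at y)"
proof -
  have d: "\<rho> differentiable (at y)" using assms unfolding C2_on_def C1_on_def by blast
  have "frechet_derivative \<rho> (at y) = (\<lambda>v. fdir \<rho> v y)"
    by (rule ext) (simp add: fd_expand[OF d] fdir_def)
  then show ?thesis using d frechet_derivative_works by metis
qed

lemma C2_F2:
  fixes \<rho> :: "real^'n::finite \<Rightarrow> real"
  assumes "C2_on S \<rho>" "y \<in> S"
  shows "(fdir \<rho> w has_derivative (\<lambda>v. D2 \<rho> w v y)) (at y)"
proof -
  have "(partial \<rho> j has_derivative (\<lambda>v. \<Sum>i\<in>UNIV. v$i * partial (partial \<rho> j) i y)) (at y)" for j
  proof -
    have d: "partial \<rho> j differentiable (at y)" using assms unfolding C2_on_def C1_on_def by blast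
    have "frechet_derivative (partial \<rho> j) (at y) = (\<lambda>v. \<Sum>i\<in>UNIV. v$i * partial (partial \<rho> j) i y)"
      by (rule ext) (simp add: fd_expand[OF d])
    then show ?thesis using d frechet_derivative_works by metis
  qed
  then have "((\<lambda>y. \<Sum>j\<in>UNIV. w$j * partial \<rho> j y) has_derivative
      (\<lambda>v. \<Sum>j\<in>UNIV. w$j * (\<Sum>i\<in>UNIV. v$i * partial (partial \<rho> j) i y))) (at y)"
    by (auto intro!: derivative_eq_intros)
  then show ?thesis unfolding fdir_def D2_def by simp
qed

lemma C2_D2_cont:
  fixes \<rho> :: "real^'n::finite \<Rightarrow> real"
  assumes "C2_on S \<rho>"
  shows "continuous_on S (D2 \<rho> w w')"
proof -
  have "continuous_on S (partial (partial \<rho> j) i)" for i j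
    using assms unfolding C2_on_def C1_on_def by blast
  then show ?thesis unfolding D2_def by (intro continuous_intros) auto
qed

lemma mixed_mvt:
  fixes \<rho> :: "real^'n::finite \<Rightarrow> real"
  assumes C2: "C2_on (ball x r) \<rho>" and s: "s > 0" and sr: "s * (norm a + norm b) < r"
  shows "\<exists>y\<in>ball x r. \<rho> (x + s *\<^sub>R a + s *\<^sub>R b) - \<rho> (x + s *\<^sub>R a) - \<rho> (x + s *\<^sub>R b) + \<rho> x
          = s * s * D2 \<rho> b a y"
proof -
  have inb: "x + \<sigma> *\<^sub>R a + \<tau> *\<^sub>R b \<in> ball x r" if "0 \<le> \<sigma>" "\<sigma> \<le> s" "0 \<le> \<tau>" "\<tau> \<le> s" for \<sigma> \<tau>
  proof -
    have "norm (\<sigma> *\<^sub>R a + \<tau> *\<^sub>R b) \<le> \<sigma> * norm a + \<tau> * norm b"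
      using that by (metis abs_of_nonneg norm_scaleR norm_triangle_ineq)
    also have "\<dots> \<le> s * norm a + s * norm b" using that by (simp add: add_mono mult_right_mono)
    finally have "norm (\<sigma> *\<^sub>R a + \<tau> *\<^sub>R b) < r" using sr by (simp add: algebra_simps)
    moreover have "dist x (x + \<sigma> *\<^sub>R a + \<tau> *\<^sub>R b) = norm (\<sigma> *\<^sub>R a + \<tau> *\<^sub>R b)"
      by (metis add.assoc dist_add_cancel dist_0_norm dist_commute add_0_right)
    ultimately show ?thesis by simp
  qed
  define \<phi> where "\<phi> t = \<rho> (x + s *\<^sub>R a + t *\<^sub>R b) - \<rho> (x + t *\<^sub>R b)" for t
  have "DERIV \<phi> t :> fdir \<rho> b (x + s *\<^sub>R a + t *\<^sub>R b) - fdir \<rho> b (x + t *\<^sub>R b)" if "0 \<le> t" "t \<le> s" for t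
  proof -
    have m1: "x + s *\<^sub>R a + t *\<^sub>R b \<in> ball x r" using inb[of s t] that s by simp
    have m2: "x + t *\<^sub>R b \<in> ball x r" using inb[of 0 t] that s by simp
    show ?thesis unfolding \<phi>_def
      by (intro DERIV_diff line_deriv2 C2_F1[OF C2] m1 m2)
  qed
  then obtain \<tau> where \<tau>: "0 < \<tau>" "\<tau> < s"
    "\<phi> s - \<phi> 0 = (s - 0) * (fdir \<rho> b (x + s *\<^sub>R a + \<tau> *\<^sub>R b) - fdir \<rho> b (x + \<tau> *\<^sub>R b))"
    using MVT2[OF s, of \<phi> "\<lambda>t. fdir \<rho> b (x + s *\<^sub>R a + t *\<^sub>R b) - fdir \<rho> b (x + t *\<^sub>R b)"] by auto
  define \<psi> where "\<psi> \<sigma> = fdir \<rho> b (x + \<tau> *\<^sub>R b + \<sigma> *\<^sub>R a)" for \<sigma>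
  have "DERIV \<psi> \<sigma> :> D2 \<rho> b a (x + \<tau> *\<^sub>R b + \<sigma> *\<^sub>R a)" if "0 \<le> \<sigma>" "\<sigma> \<le> s" for \<sigma>
  proof -
    have m: "x + \<tau> *\<^sub>R b + \<sigma> *\<^sub>R a \<in> ball x r" using inb[of \<sigma> \<tau>] that \<tau> by (simp add: algebra_simps)
    show ?thesis unfolding \<psi>_def by (intro line_deriv2 C2_F2[OF C2] m)
  qed
  then obtain \<sigma> where \<sigma>: "0 < \<sigma>" "\<sigma> < s"
    "\<psi> s - \<psi> 0 = (s - 0) * D2 \<rho> b a (x + \<tau> *\<^sub>R b + \<sigma> *\<^sub>R a)"
    using MVT2[OF s, of \<psi> "\<lambda>\<sigma>. D2 \<rho> b a (x + \<tau> *\<^sub>R b + \<sigma> *\<^sub>R a)"] by auto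
  have yb: "x + \<tau> *\<^sub>R b + \<sigma> *\<^sub>R a \<in> ball x r" using inb[of \<sigma> \<tau>] \<sigma> \<tau> by (simp add: algebra_simps)
  have "\<rho> (x + s *\<^sub>R a + s *\<^sub>R b) - \<rho> (x + s *\<^sub>R a) - \<rho> (x + s *\<^sub>R b) + \<rho> x = \<phi> s - \<phi> 0"
    by (simp add: \<phi>_def)
  also have "\<dots> = s * (\<psi> s - \<psi> 0)" using \<tau>(3) by (simp add: \<psi>_def algebra_simps)
  also have "\<dots> = s * s * D2 \<rho> b a (x + \<tau> *\<^sub>R b + \<sigma> *\<^sub>R a)" using \<sigma>(3) by simp
  finally show ?thesis using yb by blast
qed

lemma aux_abs3: "\<bar>p - q\<bar> < e \<Longrightarrow> \<bar>p' - r\<bar> < e \<Longrightarrow> p = p' \<Longrightarrow> e = \<bar>r - q\<bar> / 2 \<Longrightarrow> False"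
  for p q p' r e :: real
proof -
  assume a: "\<bar>p - q\<bar> < e" "\<bar>p' - r\<bar> < e" "p = p'" "e = \<bar>r - q\<bar> / 2"
  have "\<bar>(p - q) - (p - r)\<bar> \<le> \<bar>p - q\<bar> + \<bar>p - r\<bar>" by (rule abs_triangle_ineq4)
  then have "\<bar>r - q\<bar> \<le> \<bar>p - q\<bar> + \<bar>p - r\<bar>" by simp
  then show False using a by simp
qed

lemma schwarz:
  fixes \<rho> :: "real^'n::finite \<Rightarrow> real"
  assumes C2: "C2_on (ball x r) \<rho>" and r: "r > 0"
  shows "D2 \<rho> a b x = D2 \<rho> b a x"
proof (rule ccontr)
  assume ne: "D2 \<rho> a b x \<noteq> D2 \<rho> b a x"
  define \<epsilon> where "\<epsilon> = \<bar>D2 \<rho> a b x - D2 \<rho> b a x\<bar> / 2"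
  have e0: "\<epsilon> > 0" using ne by (simp add: \<epsilon>_def)
  have xb: "x \<in> ball x r" using r by simp
  have op: "open (ball x r)" by simp
  have c1: "isCont (D2 \<rho> a b) x"
    by (rule continuous_on_interior[OF C2_D2_cont[OF C2]]) (simp add: r)
  have c2: "isCont (D2 \<rho> b a) x"
    by (rule continuous_on_interior[OF C2_D2_cont[OF C2]]) (simp add: r)
  obtain d1 where d1: "d1 > 0" "\<And>y. dist y x < d1 \<Longrightarrow> dist (D2 \<rho> a b y) (D2 \<rho> a b x) < \<epsilon>"
    using c1 e0 unfolding continuous_at_eps_delta by blast
  obtain d2 where d2: "d2 > 0" "\<And>y. dist y x < d2 \<Longrightarrow> dist (D2 \<rho> b a y) (D2 \<rho> b a x) < \<epsilon>"
    using c2 e0 unfolding continuous_at_eps_delta by blast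
  note d = d1 d2
  define m where "m = min r (min d1 d2)"
  have m0: "m > 0" "m \<le> r" "m \<le> d1" "m \<le> d2" using r d by (auto simp: m_def)
  define K where "K = norm a + norm b + 1"
  define s where "s = (m / 2) / K"
  have ab: "K > 0" unfolding K_def by (simp add: add_nonneg_pos)
  have s0: "s > 0" using m0 ab by (simp add: s_def)
  have sm: "s * (norm a + norm b) < m"
  proof -
    have "s * K = m / 2" using ab unfolding s_def by simp
    then have "s * (norm a + norm b) + s = m / 2" unfolding K_def by (simp add: algebra_simps)
    then show ?thesis using s0 m0 by linarith
  qed
  have sub: "ball x m \<subseteq> ball x r" using m0 by auto
  have Cm: "C2_on (ball x m) \<rho>"
    using C2 sub unfolding C2_on_def C1_on_def by (auto intro: continuous_on_subset[OF _ sub])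
  obtain y1 where y1: "y1 \<in> ball x m" "\<rho> (x + s *\<^sub>R a + s *\<^sub>R b) - \<rho> (x + s *\<^sub>R a) - \<rho> (x + s *\<^sub>R b) + \<rho> x
          = s * s * D2 \<rho> b a y1" using mixed_mvt[OF Cm s0 sm] by blast
  obtain y2 where y2: "y2 \<in> ball x m" "\<rho> (x + s *\<^sub>R b + s *\<^sub>R a) - \<rho> (x + s *\<^sub>R b) - \<rho> (x + s *\<^sub>R a) + \<rho> x
          = s * s * D2 \<rho> a b y2"
  proof -
    have sm': "s * (norm b + norm a) < m" using sm by (simp only: add.commute)
    show ?thesis using mixed_mvt[OF Cm s0 sm'] that by blast
  qed
  have xx: "x + s *\<^sub>R b + s *\<^sub>R a = x + s *\<^sub>R a + s *\<^sub>R b" by (simp only: add.assoc add.commute[of "s *\<^sub>R b"])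
  have "s * s * D2 \<rho> b a y1 = s * s * D2 \<rho> a b y2" using y1(2) y2(2) unfolding xx by linarith
  then have eq: "D2 \<rho> b a y1 = D2 \<rho> a b y2" using s0 by simp
  have "dist y1 x < d2" "dist y2 x < d1" using y1(1) y2(1) m0 by (auto simp: dist_commute)
  then have "\<bar>D2 \<rho> b a y1 - D2 \<rho> b a x\<bar> < \<epsilon>" "\<bar>D2 \<rho> a b y2 - D2 \<rho> a b x\<bar> < \<epsilon>"
    using d by (auto simp: dist_real_def)
  then show False using eq \<epsilon>_def aux_abs3 by blast
qed

lemma quad_nonneg_lin0:
  fixes \<alpha> \<beta> :: real
  assumes "\<And>t. 0 \<le> 2 * t * \<alpha> + t * t * \<beta>"
  shows "\<alpha> = 0"
proof -
  define c where "c = \<bar>\<beta>\<bar> + 1"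
  have c0: "c > 0" by (simp add: c_def)
  have bc: "\<beta> \<le> c" by (simp add: c_def)
  define t where "t = - \<alpha> / c"
  have "0 \<le> 2 * t * \<alpha> + t * t * \<beta>" by (rule assms)
  then have "0 \<le> c * c * (2 * t * \<alpha> + t * t * \<beta>)" using c0 by simp
  also have "c * c * (2 * t * \<alpha> + t * t * \<beta>) = - 2 * \<alpha> * \<alpha> * c + \<alpha> * \<alpha> * \<beta>"
    using c0 by (simp add: t_def field_simps)
  also have "\<dots> \<le> - 2 * \<alpha> * \<alpha> * c + \<alpha> * \<alpha> * c"
    using mult_left_mono[OF bc, of "\<alpha> * \<alpha>"] by simp
  finally have "0 \<le> - (\<alpha> * \<alpha>) * c" by simp
  then have "\<alpha> * \<alpha> \<le> 0" using c0 by (simp add: mult_le_0_iff)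
  then show ?thesis by (simp add: mult_le_0_iff) linarith
qed

lemma pd_from_eigen:
  fixes S :: "real^'n::finite \<Rightarrow> real^'n" and g :: "real^'n"
  assumes lin: "linear S" and tan: "\<And>v. v \<bullet> g = 0 \<Longrightarrow> S v \<bullet> g = 0"
    and sym: "\<And>a b. a \<bullet> g = 0 \<Longrightarrow> b \<bullet> g = 0 \<Longrightarrow> a \<bullet> S b = b \<bullet> S a"
    and eig: "\<And>v \<kappa>. v \<noteq> 0 \<Longrightarrow> v \<bullet> g = 0 \<Longrightarrow> S v = \<kappa> *\<^sub>R v \<Longrightarrow> \<kappa> > 0"
    and ag: "a \<bullet> g = 0" and a0: "a \<noteq> 0"
  shows "a \<bullet> S a > 0"
proof -
  define K where "K = {v. g \<bullet> v = 0} \<inter> sphere 0 1"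
  have cK: "compact K" unfolding K_def
    by (intro closed_Int_compact closed_hyperplane compact_sphere)
  define a1 where "a1 = (1 / norm a) *\<^sub>R a"
  have a1K: "a1 \<in> K" using ag a0 by (simp add: K_def a1_def inner_commute)
  have bl: "bounded_linear S" using lin linear_conv_bounded_linear by blast
  have "continuous_on K (\<lambda>v. v \<bullet> S v)"
    by (intro continuous_intros linear_continuous_on[OF bl])
  then obtain w where wK: "w \<in> K" and wmin: "\<And>y. y \<in> K \<Longrightarrow> w \<bullet> S w \<le> y \<bullet> S y"
    using continuous_attains_inf[OF cK] a1K by blast
  define m where "m = w \<bullet> S w"
  have wg: "w \<bullet> g = 0" and wn: "norm w = 1" using wK by (auto simp: K_def inner_commute)
  have ww: "w \<bullet> w = 1" using wn by (simp add: norm_eq_sqrt_inner)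
  have lowb: "m * (u \<bullet> u) \<le> u \<bullet> S u" if ug: "u \<bullet> g = 0" for u
  proof (cases "u = 0")
    case True then show ?thesis by (simp add: linear_0[OF lin])
  next
    case False
    define u1 where "u1 = (1 / norm u) *\<^sub>R u"
    have "u1 \<in> K" using ug False by (simp add: K_def u1_def inner_commute)
    then have "m \<le> u1 \<bullet> S u1" using wmin m_def by blast
    also have "u1 \<bullet> S u1 = (u \<bullet> S u) / (norm u)^2"
      by (simp add: u1_def linear_scale[OF lin] power2_eq_square)
    finally have "m * (norm u)^2 \<le> u \<bullet> S u" using False by (simp add: pos_le_divide_eq)
    then show ?thesis by (simp add: power2_norm_eq_inner)
  qed
  have orth: "z \<bullet> S w - m * (z \<bullet> w) = 0" if zg: "z \<bullet> g = 0" for z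
  proof (rule quad_nonneg_lin0)
    fix t :: real
    have ug: "(w + t *\<^sub>R z) \<bullet> g = 0" using wg zg by (simp add: inner_add_left)
    define P where "P = (w + t *\<^sub>R z) \<bullet> S (w + t *\<^sub>R z)"
    define Q where "Q = (w + t *\<^sub>R z) \<bullet> (w + t *\<^sub>R z)"
    have 1: "m * Q \<le> P" unfolding P_def Q_def by (rule lowb[OF ug])
    have sy: "w \<bullet> S z = z \<bullet> S w" using sym wg zg by blast
    have eP: "P = m + 2 * t * (z \<bullet> S w) + t * t * (z \<bullet> S z)"
      unfolding P_def using sy
      by (simp add: linear_add[OF lin] linear_scale[OF lin] inner_add_left inner_add_right m_def algebra_simps)
    have eQ: "Q = 1 + 2 * t * (z \<bullet> w) + t * t * (z \<bullet> z)"
      unfolding Q_def using ww by (simp add: inner_add_left inner_add_right inner_commute algebra_simps)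
    have 2: "m * (1 + 2 * t * (z \<bullet> w) + t * t * (z \<bullet> z)) \<le> m + 2 * t * (z \<bullet> S w) + t * t * (z \<bullet> S z)"
      using 1 unfolding eP eQ .
    show "0 \<le> 2 * t * (z \<bullet> S w - m * (z \<bullet> w)) + t * t * (z \<bullet> S z - m * (z \<bullet> z))"
      using 2 by (simp add: algebra_simps)
  qed
  define v where "v = S w - m *\<^sub>R w"
  have vg: "v \<bullet> g = 0" using tan[OF wg] wg by (simp add: v_def inner_diff_left)
  have "v \<bullet> v = 0" using orth[OF vg] by (simp add: v_def inner_diff_right algebra_simps)
  then have "S w = m *\<^sub>R w" by (simp add: v_def)
  moreover have "w \<noteq> 0" using wn by auto
  ultimately have m0: "m > 0" using eig wg by blast
  have "m \<le> a1 \<bullet> S a1" using wmin[OF a1K] m_def by simp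
  also have "a1 \<bullet> S a1 = (a \<bullet> S a) / (norm a)^2"
    by (simp add: a1_def linear_scale[OF lin] power2_eq_square)
  finally show ?thesis using m0 a0 by (smt (verit) divide_nonpos_pos zero_less_power2 norm_eq_zero)
qed

lemma has_derivative_vec:
  fixes f :: "'a::real_normed_vector \<Rightarrow> real^'n::finite"
  assumes "\<And>k. ((\<lambda>y. f y $ k) has_derivative (\<lambda>v. f' v $ k)) (at x)"
  shows "(f has_derivative f') (at x)"
proof (rule has_derivative_componentwise_within[THEN iffD2], rule ballI)
  fix i :: "real^'n" assume "i \<in> Basis"
  then obtain k u where "i = axis k u" "u \<in> (Basis :: real set)" unfolding Basis_vec_def by blast
  then have i: "i = axis k 1" by simp
  show "((\<lambda>y. f y \<bullet> i) has_derivative (\<lambda>v. f' v \<bullet> i)) (at x)"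
    unfolding i cart_eq_inner_axis[symmetric] by (rule assms)
qed

lemma unit_grad_deriv:
  fixes \<rho> :: "real^'n::finite \<Rightarrow> real"
  assumes ld: "local_defining \<Omega> x r \<rho>"
  defines "nu \<equiv> \<lambda>y. (1 / norm (grad \<rho> y)) *\<^sub>R grad \<rho> y"
  shows "linear (frechet_derivative nu (at x))"
    and "(nu has_derivative frechet_derivative nu (at x)) (at x)"
    and "\<And>v. frechet_derivative nu (at x) v \<bullet> grad \<rho> x = 0"
    and "\<And>a b. a \<bullet> grad \<rho> x = 0 \<Longrightarrow>
            a \<bullet> frechet_derivative nu (at x) b = (1 / norm (grad \<rho> x)) * D2 \<rho> a b x"
proof -
  have r0: "r > 0" using ld by (simp add: local_defining_def)
  have xb: "x \<in> ball x r" using r0 by simp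
  have C2: "C2_on (ball x r) \<rho>" using ld by (simp add: local_defining_def)
  define G where "G v = (\<chi> k. \<Sum>i\<in>UNIV. v$i * partial (partial \<rho> k) i x)" for v
  have Gd: "(grad \<rho> has_derivative G) (at x)"
  proof (rule has_derivative_vec)
    fix k
    have d: "partial \<rho> k differentiable (at x)" using C2 xb unfolding C2_on_def C1_on_def by blast
    have "frechet_derivative (partial \<rho> k) (at x) = (\<lambda>v. G v $ k)"
      by (rule ext) (simp add: fd_expand[OF d] G_def)
    then have "(partial \<rho> k has_derivative (\<lambda>v. G v $ k)) (at x)"
      using d frechet_derivative_works by metis
    then show "((\<lambda>y. grad \<rho> y $ k) has_derivative (\<lambda>v. G v $ k)) (at x)"
      by (simp add: grad_def)
  qed
  have gx: "grad \<rho> x \<noteq> 0" using ld_basic(3)[OF ld xb] .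
  have "(\<lambda>y. norm (grad \<rho> y)) differentiable (at x)"
    using differentiable_compose[of norm "grad \<rho>" x UNIV] differentiable_norm_at[OF gx] Gd
    by (auto simp: differentiable_def)
  then have "(\<lambda>y. 1 / norm (grad \<rho> y)) differentiable (at x)"
    using gx by (intro differentiable_divide) auto
  then obtain c' where c': "((\<lambda>y. 1 / norm (grad \<rho> y)) has_derivative c') (at x)"
    by (auto simp: differentiable_def)
  define S where "S h = (1 / norm (grad \<rho> x)) *\<^sub>R G h + c' h *\<^sub>R grad \<rho> x" for h
  have nud: "(nu has_derivative S) (at x)"
    unfolding nu_def S_def by (rule has_derivative_scaleR[OF c' Gd])
  have FS: "frechet_derivative nu (at x) = S" using frechet_derivative_at[OF nud] by simp
  show "linear (frechet_derivative nu (at x))" unfolding FS using nud has_derivative_linear by blast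
  show "(nu has_derivative frechet_derivative nu (at x)) (at x)" unfolding FS by (rule nud)
  have nun: "nu y \<bullet> nu y = 1" if "y \<in> ball x r" for y
  proof -
    have "grad \<rho> y \<noteq> 0" using ld_basic(3)[OF ld that] .
    then show ?thesis by (simp add: nu_def dot_square_norm power2_eq_square)
  qed
  have d1: "((\<lambda>y. nu y \<bullet> nu y) has_derivative (\<lambda>h. nu x \<bullet> S h + S h \<bullet> nu x)) (at x)"
    by (rule has_derivative_inner[OF nud nud])
  have d2: "((\<lambda>y. nu y \<bullet> nu y) has_derivative (\<lambda>h. 0)) (at x)"
    by (rule has_derivative_transform_within_open[of "\<lambda>y. 1" _ _ UNIV "ball x r"])
       (use xb nun in auto)
  have "(\<lambda>h. nu x \<bullet> S h + S h \<bullet> nu x) = (\<lambda>h. 0)" using has_derivative_unique[OF d1 d2] .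
  then have "nu x \<bullet> S h + S h \<bullet> nu x = 0" for h by (rule fun_cong)
  then have o: "S h \<bullet> nu x = 0" for h by (simp add: inner_commute)
  have ng: "norm (grad \<rho> x) > 0" using gx by simp
  show "frechet_derivative nu (at x) v \<bullet> grad \<rho> x = 0" for v
  proof -
    have "S v \<bullet> nu x = (1 / norm (grad \<rho> x)) * (S v \<bullet> grad \<rho> x)" by (simp add: nu_def)
    then show ?thesis using o[of v] ng by (simp add: FS)
  qed
  show "a \<bullet> frechet_derivative nu (at x) b = (1 / norm (grad \<rho> x)) * D2 \<rho> a b x"
    if "a \<bullet> grad \<rho> x = 0" for a b
  proof -
    have "a \<bullet> G b = D2 \<rho> a b x" by (simp add: G_def D2_def inner_vec_def)
    then show ?thesis using that by (simp add: FS S_def inner_add_right)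
  qed
qed

lemma geo:
  fixes \<Omega> :: "(real^'n::finite) set" and \<nu> N :: "real^'n \<Rightarrow> real^'n"
  assumes dom: "bounded_C2_domain \<Omega>" and sc: "strictly_convex_C2 \<Omega>"
    and on: "outward_unit_normal \<Omega> \<nu>" and ne: "normal_extension \<Omega> \<nu> U N" and x: "x \<in> frontier \<Omega>"
  shows "linear (frechet_derivative N (at x))"
    and "\<And>j. partial N j x = frechet_derivative N (at x) (axis j 1)"
    and "\<And>a b. a \<bullet> \<nu> x = 0 \<Longrightarrow> b \<bullet> \<nu> x = 0 \<Longrightarrow>
           a \<bullet> frechet_derivative N (at x) b = b \<bullet> frechet_derivative N (at x) a"
    and "\<And>a. a \<bullet> \<nu> x = 0 \<Longrightarrow> a \<noteq> 0 \<Longrightarrow> 0 < a \<bullet> frechet_derivative N (at x) a"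
proof -
  have op: "open \<Omega>" using dom by (simp add: bounded_C2_domain_def)
  obtain r \<rho> where ld: "local_defining \<Omega> x r \<rho>" and
    eig: "\<And>v \<kappa>. v \<noteq> 0 \<Longrightarrow> v \<bullet> grad \<rho> x = 0 \<Longrightarrow>
        frechet_derivative (\<lambda>x. (1 / norm (grad \<rho> x)) *\<^sub>R grad \<rho> x) (at x) v = \<kappa> *\<^sub>R v \<Longrightarrow> \<kappa> > 0"
    using sc x unfolding strictly_convex_C2_def by blast
  define nu where "nu = (\<lambda>y. (1 / norm (grad \<rho> y)) *\<^sub>R grad \<rho> y)"
  define F where "F = frechet_derivative nu (at x)"
  define g where "g = grad \<rho> x"
  have r0: "r > 0" using ld by (simp add: local_defining_def)
  have xb: "x \<in> ball x r" using r0 by simp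
  have g0: "g \<noteq> 0" using ld_basic(3)[OF ld xb] by (simp add: g_def)
  have C2: "C2_on (ball x r) \<rho>" using ld by (simp add: local_defining_def)
  have Flin: "linear F" and Fd: "(nu has_derivative F) (at x)"
    and Ftan: "\<And>v. F v \<bullet> g = 0"
    and Fform: "\<And>a b. a \<bullet> g = 0 \<Longrightarrow> a \<bullet> F b = (1 / norm g) * D2 \<rho> a b x"
    using unit_grad_deriv[OF ld] unfolding F_def nu_def g_def by blast+
  have nueq: "\<nu> q = nu q" if q: "q \<in> frontier \<Omega>" "q \<in> ball x r" for q
  proof -
    obtain rq \<rho>q where ldq: "local_defining \<Omega> q rq \<rho>q"
      and nq: "\<nu> q = (1 / norm (grad \<rho>q q)) *\<^sub>R grad \<rho>q q"
      using on q(1) unfolding outward_unit_normal_def by blast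
    have rq: "rq > 0" using ldq by (simp add: local_defining_def)
    have qq: "q \<in> ball q rq" using rq by simp
    define e where "e = min rq (r - dist x q)"
    have e0: "e > 0" using rq q(2) by (simp add: e_def)
    have "(1 / norm (grad \<rho>q q)) *\<^sub>R grad \<rho>q q = (1 / norm (grad \<rho> q)) *\<^sub>R grad \<rho> q"
    proof (rule normal_unique[OF ld_basic(4)[OF ldq qq] ld_basic(4)[OF ld q(2)]
          ld_basic(3)[OF ldq qq] ld_basic(3)[OF ld q(2)] _ _ e0])
      show "\<rho>q q = 0" using ld_frontier[OF op ldq qq] q(1) by simp
      show "\<rho> q = 0" using ld_frontier[OF op ld q(2)] q(1) by simp
      fix z assume z: "z \<in> ball q e"
      have z1: "z \<in> ball q rq" using z by (simp add: e_def)
      have z2: "z \<in> ball x r" using z q(2) dist_triangle[of x z q] by (simp add: e_def dist_commute)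
      show "\<rho>q z < 0 \<longleftrightarrow> \<rho> z < 0" using ld_basic(6)[OF ldq z1] ld_basic(6)[OF ld z2] by simp
    qed
    then show ?thesis using nq by (simp add: nu_def)
  qed
  have NU: "x \<in> U" "C1_on U N" "\<And>y. y \<in> frontier \<Omega> \<Longrightarrow> N y = \<nu> y"
    using ne x unfolding normal_extension_def by auto
  have Nd: "N differentiable (at x)" using NU unfolding C1_on_def by blast
  define A where "A = frechet_derivative N (at x)"
  have Ad: "(N has_derivative A) (at x)" using Nd frechet_derivative_works A_def by metis
  show "linear (frechet_derivative N (at x))" using Nd linear_frechet_derivative by blast
  show "partial N j x = frechet_derivative N (at x) (axis j 1)" for j by (simp add: partial_def)
  have hd: "((\<lambda>y. N y - nu y) has_derivative (\<lambda>v. A v - F v)) (at x)"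
    by (rule has_derivative_diff[OF Ad Fd])
  have hx: "N x - nu x = 0" using NU(3)[OF x] nueq[OF x xb] by simp
  have AF: "A v = F v" if vg: "v \<bullet> g = 0" for v
  proof -
    have "A v - F v = 0"
    proof (rule deriv_zero_dir[OF hd hx])
      fix \<epsilon> \<delta> :: real assume e: "\<epsilon> > 0" and d: "\<delta> > 0"
      have rd: "(\<rho> has_derivative (\<lambda>w. g \<bullet> w)) (at x)" using ld_basic(4)[OF ld xb] by (simp add: g_def)
      have rx: "\<rho> x = 0" using ld_frontier[OF op ld xb] x by simp
      obtain t y where ty: "t > 0" "\<rho> y = 0" "y \<in> ball x r" "norm (y - x - t *\<^sub>R v) \<le> \<epsilon> * t" "norm (y - x) < \<delta>"
        using tangent_pts[OF rd rx g0 ld_cont[OF ld] vg e d r0] by blast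
      have yf: "y \<in> frontier \<Omega>" using ld_frontier[OF op ld ty(3)] ty(2) by simp
      have "N y - nu y = 0" using NU(3)[OF yf] nueq[OF yf ty(3)] by simp
      then show "\<exists>t y. t > 0 \<and> N y - nu y = 0 \<and> norm (y - x - t *\<^sub>R v) \<le> \<epsilon> * t \<and> norm (y - x) < \<delta>"
        using ty by blast
    qed
    then show ?thesis by simp
  qed
  have nux: "\<nu> x = (1 / norm g) *\<^sub>R g" using nueq[OF x xb] by (simp add: nu_def g_def)
  have ng: "norm g > 0" using g0 by simp
  have Tiff: "a \<bullet> \<nu> x = 0 \<longleftrightarrow> a \<bullet> g = 0" for a using ng by (simp add: nux)
  have Fsym: "a \<bullet> F b = b \<bullet> F a" if "a \<bullet> g = 0" "b \<bullet> g = 0" for a b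
    using Fform[OF that(1), of b] Fform[OF that(2), of a] schwarz[OF C2 r0, of a b] by simp
  have Fpos: "0 < a \<bullet> F a" if "a \<bullet> g = 0" "a \<noteq> 0" for a
  proof (rule pd_from_eigen[OF Flin _ Fsym _ that])
    show "F v \<bullet> g = 0" for v by (rule Ftan)
    show "\<kappa> > 0" if "v \<noteq> 0" "v \<bullet> g = 0" "F v = \<kappa> *\<^sub>R v" for v \<kappa>
      using eig[of v \<kappa>] that unfolding F_def nu_def g_def by blast
  qed
  show "a \<bullet> frechet_derivative N (at x) b = b \<bullet> frechet_derivative N (at x) a"
    if "a \<bullet> \<nu> x = 0" "b \<bullet> \<nu> x = 0" for a b
    using that AF Fsym Tiff unfolding A_def[symmetric] by metis
  show "0 < a \<bullet> frechet_derivative N (at x) a" if "a \<bullet> \<nu> x = 0" "a \<noteq> 0" for a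
    using that AF Fpos Tiff unfolding A_def[symmetric] by metis
qed

theorem mainTheorem9:
  fixes Br :: "'n::finite \<Rightarrow> real^'f::finite^'e::finite"
    and Bc :: "'n::finite \<Rightarrow> complex^'g::finite^'h::finite"
  shows "(\<not> cocanceling Br \<longrightarrow>
            (\<forall>(\<Omega>::(real^'n) set) \<nu> U N. bounded_C2_domain \<Omega> \<and> outward_unit_normal \<Omega> \<nu> \<and>
               normal_extension \<Omega> \<nu> U N \<longrightarrow> \<not> strongly_pseudoconvex (\<lambda>x. x) Br \<Omega> \<nu> N))
       \<and> (cocanceling Br \<and> \<not> elliptic Br \<longrightarrow>
            (\<forall>(\<Omega>::(real^'n) set) \<nu> U N. bounded_C2_domain \<Omega> \<and> strictly_convex_C2 \<Omega> \<and>
               outward_unit_normal \<Omega> \<nu> \<and> normal_extension \<Omega> \<nu> U N \<longrightarrow>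
               strongly_pseudoconvex (\<lambda>x. x) Br \<Omega> \<nu> N))
       \<and> (\<not> cocanceling Bc \<longrightarrow>
            (\<forall>(\<Omega>::(real^'n) set) \<nu> U N. bounded_C2_domain \<Omega> \<and> outward_unit_normal \<Omega> \<nu> \<and>
               normal_extension \<Omega> \<nu> U N \<longrightarrow> \<not> strongly_pseudoconvex cnj Bc \<Omega> \<nu> N))
       \<and> (cocanceling Bc \<and> \<not> elliptic Bc \<longrightarrow>
            (\<forall>(\<Omega>::(real^'n) set) \<nu> U N. bounded_C2_domain \<Omega> \<and> strictly_convex_C2 \<Omega> \<and>
               outward_unit_normal \<Omega> \<nu> \<and> normal_extension \<Omega> \<nu> U N \<longrightarrow>
               strongly_pseudoconvex cnj Bc \<Omega> \<nu> N))"
proof (intro conjI impI allI)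
  fix \<Omega> :: "(real^'n) set" and \<nu> U N
  assume "\<not> cocanceling Br" and "bounded_C2_domain \<Omega> \<and> outward_unit_normal \<Omega> \<nu> \<and> normal_extension \<Omega> \<nu> U N"
  then show "\<not> strongly_pseudoconvex (\<lambda>x. x) Br \<Omega> \<nu> N" using part1 by blast
next
  fix \<Omega> :: "(real^'n) set" and \<nu> U N
  assume "\<not> cocanceling Bc" and "bounded_C2_domain \<Omega> \<and> outward_unit_normal \<Omega> \<nu> \<and> normal_extension \<Omega> \<nu> U N"
  then show "\<not> strongly_pseudoconvex cnj Bc \<Omega> \<nu> N" using part1 by blast
next
  fix \<Omega> :: "(real^'n) set" and \<nu> U N
  assume cc: "cocanceling Br \<and> \<not> elliptic Br"
    and h: "bounded_C2_domain \<Omega> \<and> strictly_convex_C2 \<Omega> \<and> outward_unit_normal \<Omega> \<nu> \<and> normal_extension \<Omega> \<nu> U N"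
  show "strongly_pseudoconvex (\<lambda>x. x) Br \<Omega> \<nu> N"
    unfolding strongly_pseudoconvex_def
  proof (intro ballI allI impI)
    fix x u assume x: "x \<in> frontier \<Omega>" and u: "u \<in> opker (symb Br (\<nu> x)) \<and> u \<noteq> 0"
    note G = geo[of \<Omega> \<nu> U N x] h x
    show "\<exists>r>0. vinner (\<lambda>x. x) u (L_B (\<lambda>x. x) Br N x *v u) = of_real r"
      by (rule alg_real[of "frechet_derivative N (at x)" "\<nu> x"]) (use G cc u in auto)
  qed
next
  fix \<Omega> :: "(real^'n) set" and \<nu> U N
  assume cc: "cocanceling Bc \<and> \<not> elliptic Bc"
    and h: "bounded_C2_domain \<Omega> \<and> strictly_convex_C2 \<Omega> \<and> outward_unit_normal \<Omega> \<nu> \<and> normal_extension \<Omega> \<nu> U N"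
  show "strongly_pseudoconvex cnj Bc \<Omega> \<nu> N"
    unfolding strongly_pseudoconvex_def
  proof (intro ballI allI impI)
    fix x u assume x: "x \<in> frontier \<Omega>" and u: "u \<in> opker (symb Bc (\<nu> x)) \<and> u \<noteq> 0"
    note G = geo[of \<Omega> \<nu> U N x] h x
    show "\<exists>r>0. vinner cnj u (L_B cnj Bc N x *v u) = of_real r"
      by (rule alg_complex[of "frechet_derivative N (at x)" "\<nu> x"]) (use G cc u in auto)
  qed
qed

end
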